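(* Let $n\ge2$ and let $\eta$ be a unit vector in the algebraic linear span of $\{\xi_w:w\in\mathbb{F}_n^*\}$ in $F_n^2$. Then there are words $u,v\in\mathbb{F}_n^*$ such that $$L_uR_v\eta=L\xi_\varnothing=R\xi_\varnothing,$$ where $L$ is an isometry in $\mathcal{L}_n$ and $R$ is an isometry in $\mathcal{R}_n$ whose range is orthogonal to the range of $R_1$.
   Context: $F_n^2$ is the full Fock space over $\mathbb{C}^n$ with orthonormal basis $\{\xi_w:w\in\mathbb{F}_n^*\}$, where $\mathbb{F}_n^*$ is the unital free semigroup on letters $1,\dots,n$ with empty word $\varnothing$ ($\xi_\varnothing$ the vacuum vector). $L_i\xi_w=\xi_{iw}$, $R_i\xi_w=\xi_{wi}$; for $w=w_1\cdots w_k$, $L_w=L_{w_1}\cdots L_{w_k}$ and $R_w=R_{w_1}\cdots R_{w_k}$. $\mathcal{L}_n$ and $\mathcal{R}_n$ are the weakly closed unital algebras generated by $L_1,\dots,L_n$ and by $R_1,\dots,R_n$ respectively. *)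

theory Defs
  imports "HOL-Analysis.Analysis"
begin

(* Words of the free semigroup on letters 1..n are lists of naturals with letters in {1..n}.
   Vectors of the Fock space F_n^2 are coefficient functions (w \<mapsto> <x, xi_w>). *)

definition words :: "nat \<Rightarrow> nat list set" where
  "words n = {w. set w \<subseteq> {1..n}}"

definition fock :: "nat \<Rightarrow> (nat list \<Rightarrow> complex) set" where
  "fock n = {x. (\<forall>w. w \<notin> words n \<longrightarrow> x w = 0) \<and>
                 (\<lambda>w. (cmod (x w))\<^sup>2) summable_on UNIV}"

definition finner :: "(nat list \<Rightarrow> complex) \<Rightarrow> (nat list \<Rightarrow> complex) \<Rightarrow> complex" where
  "finner x y = (\<Sum>\<^sub>\<infinity>w. x w * cnj (y w))"

definition fnorm :: "(nat list \<Rightarrow> complex) \<Rightarrow> real" where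
  "fnorm x = sqrt (\<Sum>\<^sub>\<infinity>w. (cmod (x w))\<^sup>2)"

definition xi :: "nat list \<Rightarrow> nat list \<Rightarrow> complex" where
  "xi u = (\<lambda>w. if w = u then 1 else 0)"

definition fock_span :: "nat \<Rightarrow> (nat list \<Rightarrow> complex) set" where
  "fock_span n = {x. finite {w. x w \<noteq> 0} \<and> {w. x w \<noteq> 0} \<subseteq> words n}"

type_synonym op = "(nat list \<Rightarrow> complex) \<Rightarrow> (nat list \<Rightarrow> complex)"

text \<open>L_i xi_w = xi_{iw}, R_i xi_w = xi_{wi}\<close>
definition Li :: "nat \<Rightarrow> op" where
  "Li i x = (\<lambda>w. case w of [] \<Rightarrow> 0 | j # w' \<Rightarrow> if j = i then x w' else 0)"

definition Ri :: "nat \<Rightarrow> op" where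
  "Ri i x = (\<lambda>w. if w \<noteq> [] \<and> last w = i then x (butlast w) else 0)"

definition Lw :: "nat list \<Rightarrow> op" where
  "Lw u = foldr (\<lambda>i T. Li i \<circ> T) u id"

definition Rw :: "nat list \<Rightarrow> op" where
  "Rw u = foldr (\<lambda>i T. Ri i \<circ> T) u id"

definition bounded_op :: "nat \<Rightarrow> op \<Rightarrow> bool" where
  "bounded_op n T \<longleftrightarrow>
     (\<forall>x\<in>fock n. T x \<in> fock n) \<and>
     (\<forall>x\<in>fock n. \<forall>y\<in>fock n. T (\<lambda>w. x w + y w) = (\<lambda>w. T x w + T y w)) \<and>
     (\<forall>x\<in>fock n. \<forall>c. T (\<lambda>w. c * x w) = (\<lambda>w. c * T x w)) \<and>
     (\<exists>C. \<forall>x\<in>fock n. fnorm (T x) \<le> C * fnorm x)"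

definition isometry :: "nat \<Rightarrow> op \<Rightarrow> bool" where
  "isometry n T \<longleftrightarrow> bounded_op n T \<and> (\<forall>x\<in>fock n. fnorm (T x) = fnorm x)"

definition wot_closure :: "nat \<Rightarrow> op set \<Rightarrow> op set" where
  "wot_closure n S = {T. bounded_op n T \<and>
     (\<forall>P. finite P \<longrightarrow> P \<subseteq> fock n \<times> fock n \<longrightarrow> (\<forall>e>0. \<exists>A\<in>S.
        \<forall>(x, y)\<in>P. cmod (finner (T x) y - finner (A x) y) < e))}"

text \<open>unital algebras generated by L_1..L_n resp. R_1..R_n (= spans of L_w resp. R_w)\<close>
definition Lalg :: "nat \<Rightarrow> op set" where
  "Lalg n = {T. \<exists>F c. finite F \<and> F \<subseteq> words n \<and>
                 T = (\<lambda>x w. \<Sum>u\<in>F. c u * Lw u x w)}"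

definition Ralg :: "nat \<Rightarrow> op set" where
  "Ralg n = {T. \<exists>F c. finite F \<and> F \<subseteq> words n \<and>
                 T = (\<lambda>x w. \<Sum>u\<in>F. c u * Rw u x w)}"

definition Lcal :: "nat \<Rightarrow> op set" where
  "Lcal n = wot_closure n (Lalg n)"

definition Rcal :: "nat \<Rightarrow> op set" where
  "Rcal n = wot_closure n (Ralg n)"

definition orth_ranges :: "nat \<Rightarrow> op \<Rightarrow> op \<Rightarrow> bool" where
  "orth_ranges n S T \<longleftrightarrow> (\<forall>x\<in>fock n. \<forall>y\<in>fock n. finner (S x) (T y) = 0)"

end

theory Submission
  imports Defs
begin

lemma Lw_Cons: "Lw (i#p) x = Li i (Lw p x)" by (simp add: Lw_def)
lemma Rw_Cons: "Rw (i#q) x = Ri i (Rw q x)" by (simp add: Rw_def)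
lemma Lw_Nil: "Lw [] x = x" by (simp add: Lw_def)
lemma Rw_Nil: "Rw [] x = x" by (simp add: Rw_def)

lemma Lw_app: "Lw p x (p @ y) = x y"
  by (induction p) (simp_all add: Lw_Nil Lw_Cons Li_def)

lemma Lw_zero: "\<not>(\<exists>y. z = p @ y) \<Longrightarrow> Lw p x z = 0"
proof (induction p arbitrary: z)
  case Nil then show ?case by simp
next
  case (Cons i p)
  note IH = Cons.IH and pr = Cons.prems
  show ?case
  proof (cases z)
    case Nil then show ?thesis by (simp add: Lw_Cons Li_def)
  next
    case (Cons j z')
    show ?thesis
    proof (cases "j = i")
      case True
      with pr Cons have "\<not>(\<exists>y. z' = p @ y)" by auto
      with IH have "Lw p x z' = 0" by blast
      with True Cons show ?thesis by (simp add: Lw_Cons Li_def)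
    next
      case False with Cons show ?thesis by (simp add: Lw_Cons Li_def)
    qed
  qed
qed

lemma Rw_app: "Rw q x (y @ rev q) = x y"
proof (induction q arbitrary: y)
  case Nil then show ?case by (simp add: Rw_Nil)
next
  case (Cons i q)
  have "Rw (i#q) x (y @ rev (i#q)) = Ri i (Rw q x) ((y @ rev q) @ [i])"
    by (simp add: Rw_Cons)
  also have "\<dots> = Rw q x (y @ rev q)" by (simp only: Ri_def butlast_snoc last_snoc) simp
  also have "\<dots> = x y" by (rule Cons.IH)
  finally show ?case .
qed

lemma Rw_zero: "\<not>(\<exists>y. z = y @ rev q) \<Longrightarrow> Rw q x z = 0"
proof (induction q arbitrary: z)
  case Nil then show ?case by simp
next
  case (Cons i q)
  note IH = Cons.IH and pr = Cons.prems
  show ?case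
  proof (cases "z \<noteq> [] \<and> last z = i")
    case True
    then have z: "z = butlast z @ [i]" by (metis append_butlast_last_id)
    have "\<not>(\<exists>y. butlast z = y @ rev q)"
    proof
      assume "\<exists>y. butlast z = y @ rev q"
      then obtain y where "butlast z = y @ rev q" by blast
      then have "z = y @ rev (i#q)" using z by simp
      with pr show False by blast
    qed
    with IH have "Rw q x (butlast z) = 0" by blast
    with True show ?thesis by (simp add: Rw_Cons Ri_def)
  next
    case False then show ?thesis by (auto simp add: Rw_Cons Ri_def)
  qed
qed

lemma iso_gen:
  fixes S :: "nat list set" and a :: "nat list \<Rightarrow> complex"
    and f :: "nat list \<Rightarrow> nat list \<Rightarrow> nat list" and P :: "nat list \<Rightarrow> op"
  assumes fin: "finite S"
    and inj: "\<And>w. w \<in> S \<Longrightarrow> inj (f w)"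
    and disj: "\<And>w w' y y'. w \<in> S \<Longrightarrow> w' \<in> S \<Longrightarrow> f w y = f w' y' \<Longrightarrow> w = w'"
    and P1: "\<And>w x y. w \<in> S \<Longrightarrow> P w x (f w y) = x y"
    and P0: "\<And>w x z. w \<in> S \<Longrightarrow> z \<notin> range (f w) \<Longrightarrow> P w x z = 0"
    and wd: "\<And>w y. w \<in> S \<Longrightarrow> y \<in> words n \<Longrightarrow> f w y \<in> words n"
    and nrm: "(\<Sum>w\<in>S. (cmod (a w))\<^sup>2) = 1"
  shows "isometry n (\<lambda>x z. \<Sum>w\<in>S. a w * P w x z)"
proof -
  define T where "T = (\<lambda>x z. \<Sum>w\<in>S. a w * P w x z)"
  have T1: "T x (f w y) = a w * x y" if "w \<in> S" for x w y
  proof -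
    have "T x (f w y) = (\<Sum>w'\<in>S. if w' = w then a w * x y else 0)"
      unfolding T_def
    proof (rule sum.cong[OF refl])
      fix w' assume w': "w' \<in> S"
      show "a w' * P w' x (f w y) = (if w' = w then a w * x y else 0)"
      proof (cases "w' = w")
        case True then show ?thesis using P1 that by simp
      next
        case False
        have "f w y \<notin> range (f w')" using disj[OF that w'] False by (metis rangeE)
        then show ?thesis using P0[OF w'] False by simp
      qed
    qed
    also have "\<dots> = a w * x y" using that fin by (simp add: sum.delta)
    finally show ?thesis .
  qed
  have T0: "T x z = 0" if "\<And>w y. w \<in> S \<Longrightarrow> z \<noteq> f w y" for x z
    unfolding T_def by (rule sum.neutral) (metis (no_types) P0 rangeE that mult_zero_right)
  have Padd: "P w (\<lambda>z. x z + y z) z = P w x z + P w y z" if "w \<in> S" for w x y z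
  proof (cases "z \<in> range (f w)")
    case True then obtain y0 where "z = f w y0" by blast
    then show ?thesis using P1[OF that] by simp
  next
    case False then show ?thesis using P0[OF that] by simp
  qed
  have Pmul: "P w (\<lambda>z. c * x z) z = c * P w x z" if "w \<in> S" for w x c z
  proof (cases "z \<in> range (f w)")
    case True then obtain y0 where "z = f w y0" by blast
    then show ?thesis using P1[OF that] by simp
  next
    case False then show ?thesis using P0[OF that] by simp
  qed
  have Tadd: "T (\<lambda>z. x z + y z) = (\<lambda>z. T x z + T y z)" for x y
  proof
    fix z show "T (\<lambda>z. x z + y z) z = T x z + T y z"
      unfolding T_def sum.distrib[symmetric]
      by (rule sum.cong) (simp_all add: Padd distrib_left)
  qed
  have Tmul: "T (\<lambda>z. c * x z) = (\<lambda>z. c * T x z)" for x c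
  proof
    fix z show "T (\<lambda>z. c * x z) z = c * T x z"
      unfolding T_def sum_distrib_left
      by (rule sum.cong) (simp_all add: Pmul algebra_simps)
  qed
  have main: "((\<lambda>z. (cmod (T x z))\<^sup>2) has_sum (\<Sum>\<^sub>\<infinity>y. (cmod (x y))\<^sup>2)) UNIV"
    if "x \<in> fock n" for x
  proof -
    define s where "s = (\<Sum>\<^sub>\<infinity>y. (cmod (x y))\<^sup>2)"
    define h where "h = (\<lambda>z. (cmod (T x z))\<^sup>2)"
    have hs: "((\<lambda>y. (cmod (x y))\<^sup>2) has_sum s) UNIV"
      using that unfolding fock_def s_def by (auto intro: has_sum_infsum)
    have piece: "(h has_sum ((cmod (a w))\<^sup>2 * s)) (range (f w))" if "w \<in> S" for w
    proof -
      have e: "(h \<circ> f w) = (\<lambda>y. (cmod (a w))\<^sup>2 * (cmod (x y))\<^sup>2)"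
        using T1[OF that] by (auto simp: h_def norm_mult power_mult_distrib)
      have "((\<lambda>y. (cmod (a w))\<^sup>2 * (cmod (x y))\<^sup>2) has_sum ((cmod (a w))\<^sup>2 * s)) UNIV"
        by (rule has_sum_cmult_right[OF hs])
      then show ?thesis by (subst has_sum_reindex[OF inj[OF that]]) (simp only: e)
    qed
    have ind: "finite S' \<Longrightarrow> S' \<subseteq> S \<Longrightarrow>
      (h has_sum (\<Sum>w\<in>S'. (cmod (a w))\<^sup>2 * s)) (\<Union>w\<in>S'. range (f w))" for S'
    proof (induction S' rule: finite_induct)
      case empty show ?case by simp
    next
      case (insert w S')
      have d: "range (f w) \<inter> (\<Union>w'\<in>S'. range (f w')) = {}"
        using insert.hyps(2) insert.prems disj by blast
      have "(h has_sum ((cmod (a w))\<^sup>2 * s + (\<Sum>w\<in>S'. (cmod (a w))\<^sup>2 * s)))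
               (range (f w) \<union> (\<Union>w\<in>S'. range (f w)))"
        by (rule has_sum_Un_disjoint[OF piece insert.IH d]) (use insert.prems in auto)
      then show ?case using insert.hyps by simp
    qed
    have U: "(h has_sum (\<Sum>w\<in>S. (cmod (a w))\<^sup>2 * s)) (\<Union>w\<in>S. range (f w))"
      using ind fin by blast
    have "(\<Sum>w\<in>S. (cmod (a w))\<^sup>2 * s) = s" using nrm by (simp add: sum_distrib_right[symmetric])
    then have U': "(h has_sum s) (\<Union>w\<in>S. range (f w))" using U by simp
    have "(h has_sum s) (\<Union>w\<in>S. range (f w)) \<longleftrightarrow> (h has_sum s) UNIV"
    proof (rule has_sum_cong_neutral)
      fix z assume "z \<in> UNIV - (\<Union>w\<in>S. range (f w))"
      then have "\<And>w y. w \<in> S \<Longrightarrow> z \<noteq> f w y" by blast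
      then show "h z = 0" unfolding h_def using T0 by simp
    qed auto
    with U' show ?thesis unfolding h_def s_def by simp
  qed
  have inF: "T x \<in> fock n" if "x \<in> fock n" for x
  proof -
    have "T x z = 0" if "z \<notin> words n" for z
    proof (rule ccontr)
      assume nz: "T x z \<noteq> 0"
      then obtain w y where wy: "w \<in> S" "z = f w y" using T0 by blast
      then have "x y \<noteq> 0" using nz T1 by auto
      then have "y \<in> words n" using \<open>x \<in> fock n\<close> unfolding fock_def by blast
      then show False using wd wy that by blast
    qed
    moreover have "(\<lambda>z. (cmod (T x z))\<^sup>2) summable_on UNIV"
      using main[OF that] has_sum_imp_summable by blast
    ultimately show ?thesis unfolding fock_def by blast
  qed
  have nm: "fnorm (T x) = fnorm x" if "x \<in> fock n" for x
    unfolding fnorm_def using infsumI[OF main[OF that]] by simp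
  have "isometry n T"
    unfolding isometry_def bounded_op_def
    using inF nm Tadd Tmul by (auto intro: exI[of _ 1])
  then show ?thesis unfolding T_def .
qed


lemma core_aux:
  assumes "length us \<le> M" "us \<noteq> []"
  shows "(2 # replicate M 1 @ [2]) @ y \<noteq> us @ (2 # replicate M (1::nat) @ [2]) @ y'"
proof
  assume eq: "(2 # replicate M 1 @ [2]) @ y = us @ (2 # replicate M (1::nat) @ [2]) @ y'"
  obtain c us' where us: "us = c # us'" using assms(2) by (cases us) auto
  from eq us have e2: "replicate M 1 @ 2 # y = us' @ 2 # replicate M 1 @ 2 # y'" by simp
  have l: "length us' < M" using assms(1) us by simp
  from e2 have "(replicate M 1 @ 2 # y) ! length us' = (us' @ 2 # replicate M 1 @ 2 # y') ! length us'"
    by simp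
  with l show False by (simp add: nth_append)
qed

lemma core:
  assumes "length w \<le> M" "length w' \<le> M"
    and eq: "w @ (2 # replicate M 1 @ [2]) @ y = w' @ (2 # replicate M (1::nat) @ [2]) @ y'"
  shows "w = w'"
proof -
  define U :: "nat list" where "U = 2 # replicate M 1 @ [2]"
  from eq have eq': "w @ (U @ y) = w' @ (U @ y')" unfolding U_def by simp
  then obtain us where us: "(w = w' @ us \<and> us @ U @ y = U @ y') \<or> (w @ us = w' \<and> U @ y = us @ U @ y')"
    unfolding append_eq_append_conv2 by blast
  show ?thesis
  proof (cases "us = []")
    case True then show ?thesis using us by auto
  next
    case False
    from us show ?thesis
    proof
      assume h: "w = w' @ us \<and> us @ U @ y = U @ y'"
      then have "length us \<le> M" using assms(1) by simp
      from core_aux[OF this False, of y' y] h show ?thesis unfolding U_def by simp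
    next
      assume h: "w @ us = w' \<and> U @ y = us @ U @ y'"
      then have "length us \<le> M" using assms(2) by auto
      from core_aux[OF this False, of y y'] h show ?thesis unfolding U_def by simp
    qed
  qed
qed

lemma in_Lcal:
  assumes "finite S" "inj_on g S" "g ` S \<subseteq> words n"
    and b: "bounded_op n (\<lambda>x z. \<Sum>w\<in>S. a w * Lw (g w) x z)"
  shows "(\<lambda>x z. \<Sum>w\<in>S. a w * Lw (g w) x z) \<in> Lcal n"
proof -
  have "(\<lambda>x z. \<Sum>w\<in>S. a w * Lw (g w) x z) =
        (\<lambda>x z. \<Sum>p\<in>g ` S. (a \<circ> inv_into S g) p * Lw p x z)"
    using assms(2) by (simp add: sum.reindex)
  then have A: "(\<lambda>x z. \<Sum>w\<in>S. a w * Lw (g w) x z) \<in> Lalg n"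
    unfolding Lalg_def using assms(1,3) by blast
  show ?thesis unfolding Lcal_def wot_closure_def
    apply (intro CollectI conjI b allI impI)
    apply (rule bexI[OF _ A])
    by auto
qed

lemma in_Rcal:
  assumes "finite S" "inj_on g S" "g ` S \<subseteq> words n"
    and b: "bounded_op n (\<lambda>x z. \<Sum>w\<in>S. a w * Rw (g w) x z)"
  shows "(\<lambda>x z. \<Sum>w\<in>S. a w * Rw (g w) x z) \<in> Rcal n"
proof -
  have "(\<lambda>x z. \<Sum>w\<in>S. a w * Rw (g w) x z) =
        (\<lambda>x z. \<Sum>p\<in>g ` S. (a \<circ> inv_into S g) p * Rw p x z)"
    using assms(2) by (simp add: sum.reindex)
  then have A: "(\<lambda>x z. \<Sum>w\<in>S. a w * Rw (g w) x z) \<in> Ralg n"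
    unfolding Ralg_def using assms(1,3) by blast
  show ?thesis unfolding Rcal_def wot_closure_def
    apply (intro CollectI conjI b allI impI)
    apply (rule bexI[OF _ A])
    by auto
qed


lemma Lx: "Lw p (xi []) z = (if z = p then 1 else 0)"
proof (cases "\<exists>y. z = p @ y")
  case True then obtain y where "z = p @ y" by blast
  then show ?thesis by (simp add: Lw_app xi_def)
next
  case False
  then have "z \<noteq> p" by (metis append_Nil2)
  with False show ?thesis by (simp add: Lw_zero)
qed

lemma Rx: "Rw (rev p) (xi []) z = (if z = p then 1 else 0)"
proof (cases "\<exists>y. z = y @ p")
  case True then obtain y where "z = y @ p" by blast
  then show ?thesis using Rw_app[of "rev p" "xi []" y] by (simp add: xi_def)
next
  case False
  then have "z \<noteq> p" by (metis append_Nil)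
  with False show ?thesis using Rw_zero[of z "rev p"] by simp
qed

theorem lemma4p3:
  fixes n :: nat and \<eta> :: "nat list \<Rightarrow> complex"
  assumes "n \<ge> 2"
    and "\<eta> \<in> fock_span n"
    and "fnorm \<eta> = 1"
  shows "\<exists>u v L R. u \<in> words n \<and> v \<in> words n \<and>
           L \<in> Lcal n \<and> isometry n L \<and>
           R \<in> Rcal n \<and> isometry n R \<and> orth_ranges n R (Ri 1) \<and>
           Lw u (Rw v \<eta>) = L (xi []) \<and> L (xi []) = R (xi [])"
proof -
  define S where "S = {w. \<eta> w \<noteq> 0}"
  have fin: "finite S" and Sw: "S \<subseteq> words n" using assms(2) unfolding fock_span_def S_def by auto
  have nrm: "(\<Sum>w\<in>S. (cmod (\<eta> w))\<^sup>2) = 1"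
  proof -
    have "(\<Sum>\<^sub>\<infinity>w. (cmod (\<eta> w))\<^sup>2) = (\<Sum>\<^sub>\<infinity>w\<in>S. (cmod (\<eta> w))\<^sup>2)"
      by (rule infsum_cong_neutral) (auto simp: S_def)
    also have "\<dots> = (\<Sum>w\<in>S. (cmod (\<eta> w))\<^sup>2)" using fin by simp
    finally have e: "(\<Sum>\<^sub>\<infinity>w. (cmod (\<eta> w))\<^sup>2) = (\<Sum>w\<in>S. (cmod (\<eta> w))\<^sup>2)" .
    from assms(3) have "sqrt (\<Sum>\<^sub>\<infinity>w. (cmod (\<eta> w))\<^sup>2) = 1" by (simp add: fnorm_def)
    then show ?thesis using e by simp
  qed
  define M where "M = Max (insert 0 (length ` S))"
  have lenM: "length w \<le> M" if "w \<in> S" for w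
    unfolding M_def using fin that by (intro Max_ge) auto
  define u :: "nat list" where "u = 2 # replicate M 1 @ [2]"
  have ru: "rev u = u" by (simp add: u_def)
  have uw: "u \<in> words n" using assms(1) by (auto simp: u_def words_def)
  define xw where "xw w = u @ w @ u" for w
  have xw_w: "xw w \<in> words n" if "w \<in> S" for w
    using Sw uw that by (auto simp: xw_def words_def)
  have xw_inj: "inj_on xw S" by (auto simp: inj_on_def xw_def)
  have rxw_inj: "inj_on (\<lambda>w. rev (xw w)) S" by (auto simp: inj_on_def xw_def)
  have dL: "w = w'" if "w \<in> S" "w' \<in> S" "xw w @ y = xw w' @ y'" for w w' y y'
  proof -
    from that(3) have "w @ u @ y = w' @ u @ y'" by (simp add: xw_def)
    then show ?thesis using core[of w M w' y y'] lenM that(1,2) by (simp add: u_def)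
  qed
  have dR: "w = w'" if "w \<in> S" "w' \<in> S" "y @ xw w = y' @ xw w'" for w w' y y'
  proof -
    from that(3) have "rev (y @ xw w) = rev (y' @ xw w')" by simp
    then have "u @ rev w @ u @ rev y = u @ rev w' @ u @ rev y'" by (simp add: xw_def ru)
    then have "rev w @ u @ rev y = rev w' @ u @ rev y'" by simp
    then have "rev w = rev w'" using core[of "rev w" M "rev w'" "rev y" "rev y'"] lenM that(1,2)
      by (simp add: u_def)
    then show ?thesis by simp
  qed
  define L where "L = (\<lambda>x z. \<Sum>w\<in>S. \<eta> w * Lw (xw w) x z)"
  define R where "R = (\<lambda>x z. \<Sum>w\<in>S. \<eta> w * Rw (rev (xw w)) x z)"
  have isoL: "isometry n L" unfolding L_def
  proof (rule iso_gen[where f="\<lambda>w y. xw w @ y"])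
    show "finite S" by (rule fin)
    show "inj (\<lambda>y. xw w @ y)" for w by (simp add: inj_def)
    show "w = w'" if "w \<in> S" "w' \<in> S" "xw w @ y = xw w' @ y'" for w w' y y' using dL that .
    show "Lw (xw w) x (xw w @ y) = x y" for w x y by (rule Lw_app)
    show "Lw (xw w) x z = 0" if "z \<notin> range (\<lambda>y. xw w @ y)" for w x z
      using that by (intro Lw_zero) blast
    show "xw w @ y \<in> words n" if "w \<in> S" "y \<in> words n" for w y
      using xw_w[OF that(1)] that(2) by (auto simp: words_def)
    show "(\<Sum>w\<in>S. (cmod (\<eta> w))\<^sup>2) = 1" by (rule nrm)
  qed
  have isoR: "isometry n R" unfolding R_def
  proof (rule iso_gen[where f="\<lambda>w y. y @ xw w"])
    show "finite S" by (rule fin)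
    show "inj (\<lambda>y. y @ xw w)" for w by (simp add: inj_def)
    show "w = w'" if "w \<in> S" "w' \<in> S" "y @ xw w = y' @ xw w'" for w w' y y' using dR that .
    show "Rw (rev (xw w)) x (y @ xw w) = x y" for w x y
      using Rw_app[of "rev (xw w)" x y] by simp
    show "Rw (rev (xw w)) x z = 0" if "z \<notin> range (\<lambda>y. y @ xw w)" for w x z
      using that by (intro Rw_zero) auto
    show "y @ xw w \<in> words n" if "w \<in> S" "y \<in> words n" for w y
      using xw_w[OF that(1)] that(2) by (auto simp: words_def)
    show "(\<Sum>w\<in>S. (cmod (\<eta> w))\<^sup>2) = 1" by (rule nrm)
  qed
  have LL: "L \<in> Lcal n" unfolding L_def
    by (rule in_Lcal[OF fin xw_inj]) (use xw_w isoL in \<open>auto simp: L_def isometry_def\<close>)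
  have RR: "R \<in> Rcal n" unfolding R_def
    by (rule in_Rcal[OF fin rxw_inj]) (use xw_w isoR in \<open>fastforce simp: R_def isometry_def words_def\<close>)+
  have orth: "orth_ranges n R (Ri 1)"
    unfolding orth_ranges_def finner_def
  proof (intro ballI)
    fix x y :: "nat list \<Rightarrow> complex"
    have "R x z * cnj (Ri 1 y z) = 0" for z
    proof (cases "z \<noteq> [] \<and> last z = 1")
      case True
      have "Rw (rev (xw w)) x z = 0" for w
      proof (rule Rw_zero)
        show "\<not> (\<exists>ya. z = ya @ rev (rev (xw w)))"
        proof
          assume "\<exists>ya. z = ya @ rev (rev (xw w))"
          then obtain ya where "z = ya @ xw w" by auto
          then have "last z = 2" by (simp add: xw_def u_def)
          with True show False by simp
        qed
      qed
      then show ?thesis by (simp add: R_def)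
    next
      case False then show ?thesis by (auto simp: Ri_def)
    qed
    then have "(\<lambda>z. R x z * cnj (Ri 1 y z)) = (\<lambda>_. 0)" by (rule ext)
    then show "(\<Sum>\<^sub>\<infinity>z. R x z * cnj (Ri 1 y z)) = 0" by (simp only: infsum_0_simp)
  qed
  have Lxi: "L (xi []) z = (\<Sum>w\<in>S. \<eta> w * (if z = xw w then 1 else 0))" for z
    unfolding L_def by (simp add: Lx)
  have Rxi: "R (xi []) z = (\<Sum>w\<in>S. \<eta> w * (if z = xw w then 1 else 0))" for z
    unfolding R_def by (simp add: Rx)
  have LR: "L (xi []) = R (xi [])" using Lxi Rxi by auto
  have main: "Lw u (Rw u \<eta>) z = (\<Sum>w\<in>S. \<eta> w * (if z = xw w then 1 else 0))" for z
  proof (cases "\<exists>w0. z = u @ w0 @ u")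
    case True
    then obtain w0 where z: "z = u @ w0 @ u" by blast
    have "(\<Sum>w\<in>S. \<eta> w * (if z = xw w then 1 else 0)) = (\<Sum>w\<in>S. if w = w0 then \<eta> w0 else 0)"
      by (rule sum.cong) (auto simp: z xw_def)
    also have "\<dots> = \<eta> w0" using fin by (simp add: S_def)
    finally have r: "(\<Sum>w\<in>S. \<eta> w * (if z = xw w then 1 else 0)) = \<eta> w0" .
    have "Lw u (Rw u \<eta>) z = Rw u \<eta> (w0 @ rev u)" unfolding z ru by (rule Lw_app)
    also have "\<dots> = \<eta> w0" by (rule Rw_app)
    finally show ?thesis using r by simp
  next
    case False
    have r: "(\<Sum>w\<in>S. \<eta> w * (if z = xw w then 1 else 0)) = 0"
      using False by (intro sum.neutral) (auto simp: xw_def)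
    have "Lw u (Rw u \<eta>) z = 0"
    proof (cases "\<exists>z1. z = u @ z1")
      case True
      then obtain z1 where z: "z = u @ z1" by blast
      have "\<not> (\<exists>y. z1 = y @ rev u)" using False z ru by auto
      then have "Rw u \<eta> z1 = 0" by (rule Rw_zero)
      then show ?thesis by (simp add: z Lw_app)
    next
      case False then show ?thesis by (rule Lw_zero)
    qed
    then show ?thesis using r by simp
  qed
  have "Lw u (Rw u \<eta>) = L (xi [])" using main Lxi by auto
  then show ?thesis using uw LL isoL RR isoR orth LR by blast
qed

end
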